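(* Let $H$ be a complex Hilbert space and let $A,K\in B(H)$ be such that $A$ is positive and $(AK)^*$ is hyponormal. Then \[|\langle AKx,x\rangle|\leq \|K\|\,\langle Ax,x\rangle\] for all $x\in H$.
   Context: $B(H)$ denotes the algebra of bounded linear operators on $H$. An operator $A\in B(H)$ is positive if $\langle Ax,x\rangle\geq 0$ for all $x\in H$. An operator $T\in B(H)$ is hyponormal if $TT^*\leq T^*T$, i.e. $T^*T-TT^*$ is positive. *)

theory Defs
  imports "HOL-Analysis.Analysis"
begin

class complex_inner = real_normed_vector +
  fixes scaleC :: "complex \<Rightarrow> 'a \<Rightarrow> 'a"
    and cinner :: "'a \<Rightarrow> 'a \<Rightarrow> complex"
  assumes scaleC_add_right: "scaleC c (x + y) = scaleC c x + scaleC c y"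
    and scaleC_add_left: "scaleC (c + d) x = scaleC c x + scaleC d x"
    and scaleC_scaleC: "scaleC c (scaleC d x) = scaleC (c * d) x"
    and scaleC_one: "scaleC 1 x = x"
    and scaleR_scaleC: "scaleR r x = scaleC (complex_of_real r) x"
    and cinner_commute: "cinner x y = cnj (cinner y x)"
    and cinner_add_left: "cinner (x + y) z = cinner x z + cinner y z"
    and cinner_scaleC_left: "cinner (scaleC c x) y = c * cinner x y"
    and cinner_self_nonneg: "0 \<le> Re (cinner x x)"
    and cinner_self_eq_zero: "cinner x x = 0 \<longleftrightarrow> x = 0"
    and norm_eq_sqrt_cinner: "norm x = sqrt (Re (cinner x x))"

class chilbert_space = complex_inner + complete_space

definition bounded_clinear :: "('a::complex_inner \<Rightarrow> 'a) \<Rightarrow> bool" where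
  "bounded_clinear T \<longleftrightarrow> bounded_linear T \<and> (\<forall>c x. T (scaleC c x) = scaleC c (T x))"

definition cadjoint :: "('a::complex_inner \<Rightarrow> 'a) \<Rightarrow> ('a \<Rightarrow> 'a)" where
  "cadjoint T = (THE S. \<forall>x y. cinner (T x) y = cinner x (S y))"

definition positive_op :: "('a::complex_inner \<Rightarrow> 'a) \<Rightarrow> bool" where
  "positive_op A \<longleftrightarrow> (\<forall>x. Im (cinner (A x) x) = 0 \<and> 0 \<le> Re (cinner (A x) x))"

definition hyponormal :: "('a::complex_inner \<Rightarrow> 'a) \<Rightarrow> bool" where
  "hyponormal T \<longleftrightarrow> positive_op (\<lambda>x. cadjoint T (T x) - T (cadjoint T x))"

end

theory Submission
  imports Defs
begin


lemma cinner_add_right: "cinner (x::'a::complex_inner) (y + z) = cinner x y + cinner x z"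
  by (metis cinner_commute cinner_add_left complex_cnj_add)

lemma cinner_scaleC_right: "cinner (x::'a::complex_inner) (scaleC c y) = cnj c * cinner x y"
  by (metis cinner_commute cinner_scaleC_left complex_cnj_mult)

lemma cinner_zero_left[simp]: "cinner 0 (x::'a::complex_inner) = 0"
  using cinner_add_left[of 0 0 x] by simp

lemma cinner_zero_right[simp]: "cinner (x::'a::complex_inner) 0 = 0"
  using cinner_add_right[of x 0 0] by simp

lemma cinner_minus_left: "cinner (- x) (y::'a::complex_inner) = - cinner x y"
  using cinner_add_left[of x "-x" y] by (metis neg_eq_iff_add_eq_0 add.right_inverse cinner_zero_left)

lemma cinner_diff_left: "cinner (x - y) (z::'a::complex_inner) = cinner x z - cinner y z"
  using cinner_add_left[of x "-y" z] cinner_minus_left[of y z] by simp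

lemma cinner_minus_right: "cinner (x::'a::complex_inner) (- y) = - cinner x y"
  by (metis cinner_commute cinner_minus_left complex_cnj_minus)

lemma cinner_diff_right: "cinner (x::'a::complex_inner) (y - z) = cinner x y - cinner x z"
  using cinner_add_right[of x y "-z"] cinner_minus_right[of x z] by simp

lemma scaleC_zero_left[simp]: "scaleC 0 (x::'a::complex_inner) = 0"
  by (metis scaleR_scaleC of_real_0 scaleR_zero_left)

lemma scaleC_zero_right[simp]: "scaleC c (0::'a::complex_inner) = 0"
  using scaleC_add_right[of c "0::'a" 0] by simp

lemma scaleC_real: "scaleC (complex_of_real r) (x::'a::complex_inner) = scaleR r x"
  by (simp add: scaleR_scaleC)

lemma cinner_self_Im: "Im (cinner (x::'a::complex_inner) x) = 0"
proof -
  have "Im (cinner x x) = Im (cnj (cinner x x))" using cinner_commute[of x x] by simp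
  then show ?thesis by simp
qed

lemma norm_sq: "(norm (x::'a::complex_inner))^2 = Re (cinner x x)"
  using norm_eq_sqrt_cinner[of x] cinner_self_nonneg[of x] by simp

lemma cinner_self_norm: "cinner (x::'a::complex_inner) x = complex_of_real ((norm x)^2)"
  using norm_sq[of x] cinner_self_Im[of x] by (simp add: complex_eq_iff)

lemma scaleC_minus: "scaleC c (- x) = - scaleC c (x::'a::complex_inner)"
  by (metis scaleC_add_right add.right_inverse scaleC_zero_right neg_eq_iff_add_eq_0)

lemma scaleC_diff: "scaleC c (x - y) = scaleC c x - scaleC c (y::'a::complex_inner)"
  by (metis scaleC_add_right scaleC_minus diff_conv_add_uminus)

lemma scaleC_minus_left: "scaleC (- c) x = - scaleC c (x::'a::complex_inner)"
  by (metis scaleC_add_left add.right_inverse scaleC_zero_left neg_eq_iff_add_eq_0)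

lemma scaleC_diff_left: "scaleC (c - d) x = scaleC c x - scaleC d (x::'a::complex_inner)"
  by (metis scaleC_add_left scaleC_minus_left diff_conv_add_uminus)

lemma scalar_cs:
  fixes a b :: real and c :: complex
  assumes "\<And>t::complex. 0 \<le> a - 2 * Re (cnj t * c) + (cmod t)^2 * b"
    and "0 \<le> b"
  shows "(cmod c)^2 \<le> a * b"
proof (cases "b = 0")
  case True
  { fix s :: real
    have "0 \<le> a - 2 * s * (cmod c)^2"
    proof -
      have e: "cnj (complex_of_real s * c) * c = complex_of_real (s * (cmod c)^2)"
        by (simp add: complex_norm_square[symmetric] mult.commute mult.left_commute)
      show ?thesis using assms(1)[of "complex_of_real s * c"] True
        by (simp only: e Re_complex_of_real)
    qed }
  note * = this
  show ?thesis
  proof (rule ccontr)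
    assume "\<not> ?thesis"
    then have pos: "(cmod c)^2 > 0" using True by simp
    have "0 \<le> a - 2 * ((a + 1) / (2 * (cmod c)^2)) * (cmod c)^2" using *[of "(a+1)/(2*(cmod c)^2)"] .
    then show False using pos by (simp add: field_simps)
  qed
next
  case False
  then have bp: "b > 0" using assms(2) by simp
  have "0 \<le> a - 2 * Re (cnj (c / complex_of_real b) * c) + (cmod (c / complex_of_real b))^2 * b" using assms(1) .
  moreover have "Re (cnj (c / complex_of_real b) * c) = (cmod c)^2 / b"
  proof -
    have "cnj (c / complex_of_real b) * c = (c * cnj c) / complex_of_real b" by (simp add: mult.commute)
    also have "\<dots> = complex_of_real ((cmod c)^2 / b)" by (simp only: complex_norm_square[symmetric] of_real_divide)
    finally have "cnj (c / complex_of_real b) * c = complex_of_real ((cmod c)^2 / b)" .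
    then show ?thesis by (simp only: Re_complex_of_real)
  qed
  moreover have "(cmod (c / complex_of_real b))^2 * b = (cmod c)^2 / b"
    using bp by (simp add: norm_divide power_divide power2_eq_square)
  ultimately have "0 \<le> a - (cmod c)^2 / b" by linarith
  then show ?thesis using bp by (simp add: field_simps)
qed



lemma bclin_add: "bounded_clinear A \<Longrightarrow> A (x + y) = A x + A y"
  unfolding bounded_clinear_def by (simp add: linear_simps)

lemma bclin_diff: "bounded_clinear A \<Longrightarrow> A (x - y) = A x - A y"
  unfolding bounded_clinear_def by (simp add: linear_simps)

lemma bclin_scaleC: "bounded_clinear A \<Longrightarrow> A (scaleC c x) = scaleC c (A x)"
  unfolding bounded_clinear_def by simp

lemma bclin_bl: "bounded_clinear A \<Longrightarrow> bounded_linear A"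
  unfolding bounded_clinear_def by simp

lemma pos_selfadj:
  fixes A :: "'a::complex_inner \<Rightarrow> 'a"
  assumes "bounded_clinear A" "positive_op A"
  shows "cinner (A x) y = cinner x (A y)"
proof -
  define a where "a = cinner (A x) y"
  define b where "b = cinner (A y) x"
  have p: "\<And>z. Im (cinner (A z) z) = 0" using assms(2) unfolding positive_op_def by simp
  have "Im (cinner (A (x + y)) (x + y)) = 0" by (rule p)
  then have "Im (cinner (A x) x) + Im a + Im b + Im (cinner (A y) y) = 0"
    unfolding a_def b_def using assms(1)
    by (simp add: bclin_add cinner_add_left cinner_add_right)
  then have 1: "Im a + Im b = 0" using p[of x] p[of y] by simp
  have "Im (cinner (A (x + scaleC \<i> y)) (x + scaleC \<i> y)) = 0" by (rule p)
  then have "Im (cinner (A x) x + (- \<i>) * a + \<i> * b + cinner (A y) y) = 0"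
    unfolding a_def b_def using assms(1)
    by (simp add: bclin_add bclin_scaleC cinner_add_left cinner_add_right cinner_scaleC_left cinner_scaleC_right
        algebra_simps)
  then have 2: "Re b - Re a = 0" using p[of x] p[of y] by simp
  have "b = cnj a" using 1 2 by (simp add: complex_eq_iff)
  then show ?thesis unfolding a_def b_def by (metis cinner_commute complex_cnj_cnj)
qed

lemma form_cs:
  fixes A :: "'a::complex_inner \<Rightarrow> 'a"
  assumes "bounded_clinear A" "positive_op A"
  shows "(cmod (cinner (A u) v))^2 \<le> Re (cinner (A u) u) * Re (cinner (A v) v)"
proof (rule scalar_cs)
  have p: "\<And>z. Im (cinner (A z) z) = 0 \<and> 0 \<le> Re (cinner (A z) z)" using assms(2) unfolding positive_op_def by simp
  show "0 \<le> Re (cinner (A v) v)" using p by simp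
  fix t :: complex
  have "0 \<le> Re (cinner (A (u - scaleC t v)) (u - scaleC t v))" using p by simp
  also have "cinner (A (u - scaleC t v)) (u - scaleC t v) =
     cinner (A u) u - cnj t * cinner (A u) v - t * cinner (A v) u + t * cnj t * cinner (A v) v"
    using assms(1)
    by (simp add: bclin_diff bclin_scaleC cinner_diff_left cinner_diff_right cinner_scaleC_left cinner_scaleC_right
        algebra_simps)
  also have "cinner (A v) u = cnj (cinner (A u) v)"
    by (metis assms cinner_commute pos_selfadj)
  finally have "0 \<le> Re (cinner (A u) u - cnj t * cinner (A u) v - t * cnj (cinner (A u) v) + t * cnj t * cinner (A v) v)" .
  moreover have "Re (t * cnj (cinner (A u) v)) = Re (cnj t * cinner (A u) v)"
    by (simp add: algebra_simps)
  moreover have "Re (t * cnj t * cinner (A v) v) = (cmod t)^2 * Re (cinner (A v) v)"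
  proof -
    have "t * cnj t * cinner (A v) v = complex_of_real ((cmod t)^2) * cinner (A v) v"
      by (simp only: complex_norm_square)
    then have "Re (t * cnj t * cinner (A v) v) = Re (complex_of_real ((cmod t)^2) * cinner (A v) v)"
      by (simp only:)
    also have "\<dots> = (cmod t)^2 * Re (cinner (A v) v)" by simp
    finally show ?thesis .
  qed
  moreover have "Re (cinner (A u) u - cnj t * cinner (A u) v - t * cnj (cinner (A u) v) + t * cnj t * cinner (A v) v)
     = Re (cinner (A u) u) - Re (cnj t * cinner (A u) v) - Re (t * cnj (cinner (A u) v)) + Re (t * cnj t * cinner (A v) v)"
    by (simp only: minus_complex.sel plus_complex.sel)
  ultimately show "0 \<le> Re (cinner (A u) u) - 2 * Re (cnj t * cinner (A u) v) + (cmod t)^2 * Re (cinner (A v) v)"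
    by linarith
qed



lemma id_bclin: "bounded_clinear (id :: 'a::complex_inner \<Rightarrow> 'a)"
  unfolding bounded_clinear_def by (simp add: bounded_linear_ident[unfolded id_def] id_def)

lemma id_pos: "positive_op (id :: 'a::complex_inner \<Rightarrow> 'a)"
  unfolding positive_op_def by (simp add: cinner_self_Im cinner_self_nonneg)

lemma cs: "cmod (cinner (x::'a::complex_inner) y) \<le> norm x * norm y"
proof -
  have "(cmod (cinner x y))^2 \<le> Re (cinner x x) * Re (cinner y y)"
    using form_cs[OF id_bclin id_pos, of x y] by simp
  also have "\<dots> = (norm x * norm y)^2" by (simp add: norm_sq power_mult_distrib)
  finally show ?thesis by (rule power2_le_imp_le) simp
qed

lemma parallelogram:
  "(norm (a + b))^2 + (norm (a - b))^2 = 2 * (norm (a::'a::complex_inner))^2 + 2 * (norm b)^2"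
  by (simp add: norm_sq cinner_add_left cinner_add_right cinner_diff_left cinner_diff_right)

lemma lip_tendsto:
  assumes "\<And>a b. norm (h a - h b) \<le> K * norm (a - b)" "f \<longlonglongrightarrow> x"
  shows "(\<lambda>n. h (f n)) \<longlonglongrightarrow> h x"
proof (rule LIM_zero_cancel, rule Lim_null_comparison)
  show "\<forall>\<^sub>F n in sequentially. norm (h (f n) - h x) \<le> K * norm (f n - x)"
    using assms(1) by simp
  have "(\<lambda>n. f n - x) \<longlonglongrightarrow> 0" using assms(2) by (rule LIM_zero)
  then have "(\<lambda>n. norm (f n - x)) \<longlonglongrightarrow> 0" using tendsto_norm_zero by blast
  then show "(\<lambda>n. K * norm (f n - x)) \<longlonglongrightarrow> 0" using tendsto_mult_right_zero by blast
qed

lemma cinner_left_tendsto: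
  assumes "f \<longlonglongrightarrow> x" shows "(\<lambda>n. cinner (f n) (u::'a::complex_inner)) \<longlonglongrightarrow> cinner x u"
proof (rule lip_tendsto[OF _ assms])
  fix a b :: 'a
  show "norm (cinner a u - cinner b u) \<le> norm u * norm (a - b)"
    using cs[of "a - b" u] by (simp add: cinner_diff_left mult.commute)
qed

lemma min_norm:
  fixes C :: "'a::chilbert_space set"
  assumes "closed C" "convex C" "C \<noteq> {}"
  shows "\<exists>u\<in>C. \<forall>w\<in>C. norm u \<le> norm w"
proof -
  define d where "d = Inf (norm ` C)"
  have bdd: "bdd_below (norm ` C)" by (rule bdd_belowI[of _ 0]) auto
  have dle: "\<And>w. w \<in> C \<Longrightarrow> d \<le> norm w" unfolding d_def using bdd by (simp add: cInf_lower)
  obtain w0 where w0: "w0 \<in> C" using assms(3) by auto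
  have d0: "0 \<le> d" unfolding d_def using assms(3) by (intro cInf_greatest) auto
  have "\<forall>n. \<exists>w. w \<in> C \<and> (norm w)^2 < d^2 + inverse (real (Suc n))"
  proof
    fix n
    have "d < sqrt (d^2 + inverse (real (Suc n)))"
    proof -
      have "sqrt (d^2) < sqrt (d^2 + inverse (real (Suc n)))" by (rule real_sqrt_less_mono) simp
      then show ?thesis using d0 by simp
    qed
    then obtain w where "w \<in> C" "norm w < sqrt (d^2 + inverse (real (Suc n)))"
      using cInf_lessD[of "norm ` C"] assms(3) unfolding d_def by auto
    moreover from this(2) have "(norm w)^2 < d^2 + inverse (real (Suc n))"
    proof -
      assume h: "norm w < sqrt (d^2 + inverse (real (Suc n)))"
      have "(norm w)^2 < (sqrt (d^2 + inverse (real (Suc n))))^2"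
        using h by (intro power_strict_mono) auto
      then show ?thesis by simp
    qed
    ultimately show "\<exists>w. w \<in> C \<and> (norm w)^2 < d^2 + inverse (real (Suc n))" by blast
  qed
  from choice[OF this] obtain w where wCn: "\<forall>n. w n \<in> C \<and> (norm (w n))^2 < d^2 + inverse (real (Suc n))"
    by blast
  then have wC: "\<And>n. w n \<in> C" and wn: "\<And>n. (norm (w n))^2 < d^2 + inverse (real (Suc n))" by auto
  have key: "(norm (w m - w n))^2 \<le> 2 * inverse (real (Suc m)) + 2 * inverse (real (Suc n))" for m n
  proof -
    have "(1/2) *\<^sub>R w m + (1/2) *\<^sub>R w n \<in> C" using assms(2) wC unfolding convex_def by auto
    then have "d \<le> norm ((1/2) *\<^sub>R w m + (1/2) *\<^sub>R w n)" by (rule dle)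
    also have "(1/2) *\<^sub>R w m + (1/2) *\<^sub>R w n = (1/2) *\<^sub>R (w m + w n)" by (simp add: scaleR_add_right)
    finally have "2 * d \<le> norm (w m + w n)" by simp
    then have "(2 * d)^2 \<le> (norm (w m + w n))^2" using d0 by (intro power_mono) auto
    then show ?thesis using parallelogram[of "w m" "w n"] wn[of m] wn[of n] by (simp add: power_mult_distrib)
  qed
  have "Cauchy w"
  proof (rule metric_CauchyI)
    fix e :: real assume e: "0 < e"
    obtain M where M: "inverse (real (Suc M)) < e^2 / 4"
      using reals_Archimedean[of "e^2/4"] e by auto
    show "\<exists>M. \<forall>m\<ge>M. \<forall>n\<ge>M. dist (w m) (w n) < e"
    proof (intro exI allI impI)
      fix m n assume mn: "M \<le> m" "M \<le> n"
      have im: "inverse (real (Suc m)) \<le> inverse (real (Suc M))" using mn by (simp add: le_imp_inverse_le)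
      have inn: "inverse (real (Suc n)) \<le> inverse (real (Suc M))" using mn by (simp add: le_imp_inverse_le)
      have "(dist (w m) (w n))^2 < e^2"
        using key[of m n] im inn M unfolding dist_norm by linarith
      then show "dist (w m) (w n) < e" by (rule power2_less_imp_less) (use e in simp)
    qed
  qed
  then have "convergent w" by (rule Cauchy_convergent)
  then obtain u where wu: "w \<longlonglongrightarrow> u" unfolding convergent_def by blast
  have uC: "u \<in> C" by (rule closed_sequentially[OF assms(1) _ wu]) (simp add: wC)
  have lim1: "(\<lambda>n. (norm (w n))^2) \<longlonglongrightarrow> (norm u)^2" using wu by (intro tendsto_intros)
  have lim2: "(\<lambda>n. d^2 + inverse (real (Suc n))) \<longlonglongrightarrow> d^2 + 0"
    by (intro tendsto_intros LIMSEQ_inverse_real_of_nat)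
  have "(norm u)^2 \<le> d^2 + 0"
  proof (rule LIMSEQ_le[OF lim1 lim2])
    show "\<exists>N. \<forall>n\<ge>N. (norm (w n))^2 \<le> d^2 + inverse (real (Suc n))"
      using wn less_imp_le by blast
  qed
  then have "(norm u)^2 \<le> d^2" by simp
  then have "norm u \<le> d" by (rule power2_le_imp_le) (use d0 in simp)
  then have "\<forall>w\<in>C. norm u \<le> norm w" using dle order_trans by blast
  then show ?thesis using uC by blast
qed



lemma orth_from_min:
  fixes u z :: "'a::complex_inner"
  assumes "\<And>t. norm u \<le> norm (u + scaleC t z)"
  shows "cinner z u = 0"
proof -
  define a where "a = cinner z u"
  have "(cmod a)^2 \<le> 0 * Re (cinner z z)"
  proof (rule scalar_cs)
    show "0 \<le> Re (cinner z z)" by (rule cinner_self_nonneg)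
    fix s :: complex
    define t where "t = - cnj s"
    have h0: "(norm u)^2 \<le> (norm (u + scaleC t z))^2" using assms[of t] by (simp add: power_mono)
    have e1: "cinner (u + scaleC t z) (u + scaleC t z) = cinner u u + t * cinner z u + (cnj t * cinner u z + cnj t * (t * cinner z z))"
      by (simp only: cinner_add_left cinner_add_right cinner_scaleC_left cinner_scaleC_right distrib_left add.assoc)
    have e2: "cinner u z = cnj a" unfolding a_def by (rule cinner_commute)
    have h1: "(norm (u + scaleC t z))^2 = Re (cinner u u) + Re (t * a) + Re (cnj t * cnj a) + Re (cnj t * (t * cinner z z))"
      unfolding norm_sq e1 e2 a_def by (simp only: plus_complex.sel add.assoc)
    have h2: "Re (cnj t * cnj a) = Re (t * a)" by simp
    have h3: "Re (cnj t * (t * cinner z z)) = (cmod t)^2 * Re (cinner z z)"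
    proof -
      have "cnj t * (t * cinner z z) = complex_of_real ((cmod t)^2) * cinner z z"
        by (simp only: complex_norm_square mult.assoc[symmetric] mult.commute[of "cnj t" t])
      then have "Re (cnj t * (t * cinner z z)) = Re (complex_of_real ((cmod t)^2) * cinner z z)"
        by (simp only:)
      also have "\<dots> = (cmod t)^2 * Re (cinner z z)" by simp
      finally show ?thesis .
    qed
    have h4: "Re (t * a) = - Re (cnj s * a)" unfolding t_def by simp
    have h5: "cmod t = cmod s" unfolding t_def by simp
    show "0 \<le> 0 - 2 * Re (cnj s * a) + (cmod s)^2 * Re (cinner z z)"
      using h0 h1 h2 h3[unfolded h5] h4 unfolding norm_sq by linarith
  qed
  then show ?thesis unfolding a_def by simp
qed

lemma sub_riesz:
  fixes g :: "'a::chilbert_space \<Rightarrow> 'a" and F :: "'a \<Rightarrow> complex"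
  assumes gadd: "\<And>x y. g (x + y) = g x + g y"
    and gsc: "\<And>c x. g (scaleC c x) = scaleC c (g x)"
    and Fadd: "\<And>x y. F (x + y) = F x + F y"
    and Fsc: "\<And>c x. F (scaleC c x) = c * F x"
    and bnd: "\<And>x. cmod (F x) \<le> c * norm (g x)"
    and c0: "0 \<le> c"
  shows "\<exists>v. (\<forall>x. F x = cinner (g x) v) \<and> norm v \<le> c"
proof (cases "\<forall>x. F x = 0")
  case True
  then show ?thesis using c0 by (intro exI[of _ 0]) simp
next
  case False
  then obtain x0 where x0: "F x0 \<noteq> 0" by auto
  define x1 where "x1 = scaleC (inverse (F x0)) x0"
  have Fx1: "F x1 = 1" unfolding x1_def using x0 by (simp add: Fsc)
  have gdiff: "g (x - y) = g x - g y" for x y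
    by (metis gadd diff_add_cancel add_diff_cancel)
  have Fdiff: "F (x - y) = F x - F y" for x y
    by (metis Fadd diff_add_cancel add_diff_cancel)
  have gR: "g (scaleR r x) = scaleR r (g x)" for r x by (simp add: scaleR_scaleC gsc)
  have FR: "F (scaleR r x) = complex_of_real r * F x" for r x by (simp add: scaleR_scaleC Fsc)
  define S where "S = g ` {x. F x = 1}"
  define C where "C = closure S"
  have convS: "convex S"
    unfolding convex_def S_def
  proof (intro ballI allI impI)
    fix p q :: 'a and u v :: real
    assume p: "p \<in> g ` {x. F x = 1}" and q: "q \<in> g ` {x. F x = 1}" and uv: "0 \<le> u" "0 \<le> v" "u + v = 1"
    obtain a b where ab: "p = g a" "q = g b" "F a = 1" "F b = 1" using p q by auto
    have "u *\<^sub>R p + v *\<^sub>R q = g (u *\<^sub>R a + v *\<^sub>R b)" using ab by (simp add: gadd gR)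
    moreover have "F (u *\<^sub>R a + v *\<^sub>R b) = 1" using ab uv
      by (simp add: Fadd FR) (metis of_real_1 of_real_add)
    ultimately show "u *\<^sub>R p + v *\<^sub>R q \<in> g ` {x. F x = 1}" by blast
  qed
  have "C \<noteq> {}" unfolding C_def S_def using Fx1 closure_subset by blast
  then obtain u where uC: "u \<in> C" and umin: "\<And>w. w \<in> C \<Longrightarrow> norm u \<le> norm w"
    using min_norm[of C] convS unfolding C_def by (auto intro: convex_closure)
  have cpos: "0 < c"
  proof -
    have "1 \<le> c * norm (g x1)" using bnd[of x1] Fx1 by simp
    then show ?thesis using c0 by (cases "c = 0") auto
  qed
  have trans: "w + g n \<in> C" if wC: "w \<in> C" and Fn: "F n = 0" for w n
  proof -
    obtain s where s: "\<And>k. s k \<in> S" "s \<longlonglongrightarrow> w" using wC unfolding C_def closure_sequential by blast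
    have "\<And>k. s k + g n \<in> S"
    proof -
      fix k
      obtain a where a: "s k = g a" "F a = 1" using s(1)[of k] unfolding S_def by auto
      show "s k + g n \<in> S" unfolding S_def using Fn a
        by (intro image_eqI[of _ _ "a + n"]) (simp_all add: gadd Fadd)
    qed
    moreover have "(\<lambda>k. s k + g n) \<longlonglongrightarrow> w + g n" using s(2) by (intro tendsto_intros)
    ultimately show ?thesis unfolding C_def closure_sequential by (intro exI[of _ "\<lambda>k. s k + g n"]) auto
  qed
  have orth: "cinner (g n) u = 0" if "F n = 0" for n
  proof (rule orth_from_min)
    fix t
    have "F (scaleC t n) = 0" using that by (simp add: Fsc)
    then have "u + g (scaleC t n) \<in> C" using trans uC by blast
    then show "norm u \<le> norm (u + scaleC t (g n))" using umin by (simp add: gsc)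
  qed
  have const: "cinner w u = cinner (g x1) u" if wC: "w \<in> C" for w
  proof -
    obtain s where s: "\<And>k. s k \<in> S" "s \<longlonglongrightarrow> w" using wC unfolding C_def closure_sequential by blast
    have "\<And>k. cinner (s k) u = cinner (g x1) u"
    proof -
      fix k
      obtain a where a: "s k = g a" "F a = 1" using s(1)[of k] unfolding S_def by auto
      have "cinner (g (a - x1)) u = 0" using a Fx1 by (intro orth) (simp add: Fdiff)
      then show "cinner (s k) u = cinner (g x1) u" using a by (simp add: gdiff cinner_diff_left)
    qed
    then have "(\<lambda>k. cinner (s k) u) \<longlonglongrightarrow> cinner (g x1) u" by simp
    moreover have "(\<lambda>k. cinner (s k) u) \<longlonglongrightarrow> cinner w u" using s(2) by (rule cinner_left_tendsto)
    ultimately show ?thesis using LIMSEQ_unique by blast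
  qed
  have nb: "inverse c \<le> norm w" if wC: "w \<in> C" for w
  proof -
    obtain s where s: "\<And>k. s k \<in> S" "s \<longlonglongrightarrow> w" using wC unfolding C_def closure_sequential by blast
    have "\<And>k. inverse c \<le> norm (s k)"
    proof -
      fix k
      obtain a where a: "s k = g a" "F a = 1" using s(1)[of k] unfolding S_def by auto
      have "1 \<le> c * norm (g a)" using bnd[of a] a by simp
      then show "inverse c \<le> norm (s k)" using a cpos by (simp add: field_simps)
    qed
    then show ?thesis using s(2) by (intro LIMSEQ_le_const[OF tendsto_norm]) auto
  qed
  have unorm: "cinner u u = cinner (g x1) u" using const uC .
  have upos: "0 < norm u" using nb[OF uC] cpos by (meson inverse_positive_iff_positive less_le_trans)
  have rep: "cinner (g x) u = F x * complex_of_real ((norm u)^2)" for x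
  proof -
    have "F (x - scaleC (F x) x1) = 0" by (simp add: Fdiff Fsc Fx1)
    then have "cinner (g (x - scaleC (F x) x1)) u = 0" by (rule orth)
    then have "cinner (g x) u = F x * cinner (g x1) u"
      by (simp add: gdiff gsc cinner_diff_left cinner_scaleC_left)
    then show ?thesis using unorm by (simp add: cinner_self_norm)
  qed
  define v where "v = scaleC (complex_of_real (inverse ((norm u)^2))) u"
  have "F x = cinner (g x) v" for x
    unfolding v_def using rep[of x] upos by (simp add: cinner_scaleC_right field_simps)
  moreover have "norm v \<le> c"
  proof -
    have "norm v = inverse ((norm u)^2) * norm u" unfolding v_def scaleC_real by simp
    also have "\<dots> = inverse (norm u)" using upos by (simp add: field_simps power2_eq_square)
    also have "\<dots> \<le> c" using le_imp_inverse_le[OF nb[OF uC]] cpos by simp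
    finally show ?thesis .
  qed
  ultimately show ?thesis by blast
qed



lemma ext_zero: "(\<And>x. cinner x (w::'a::complex_inner) = 0) \<Longrightarrow> w = 0"
  using cinner_self_eq_zero by blast

lemma adj_prop:
  fixes T :: "'a::chilbert_space \<Rightarrow> 'a"
  assumes T: "bounded_clinear T"
  shows "cinner (T x) y = cinner x (cadjoint T y)"
proof -
  have "\<forall>y. \<exists>v. (\<forall>x. cinner (T x) y = cinner (id x) v) \<and> norm v \<le> onorm T * norm y"
  proof
    fix y
    show "\<exists>v. (\<forall>x. cinner (T x) y = cinner (id x) v) \<and> norm v \<le> onorm T * norm y"
    proof (rule sub_riesz)
      show "\<And>x y. id (x + y) = id x + id y" by simp
      show "\<And>c x. id (scaleC c x) = scaleC c (id x)" by simp
      show "\<And>a b. cinner (T (a + b)) y = cinner (T a) y + cinner (T b) y"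
        using T by (simp add: bclin_add cinner_add_left)
      show "\<And>c a. cinner (T (scaleC c a)) y = c * cinner (T a) y"
        using T by (simp add: bclin_scaleC cinner_scaleC_left)
      show "0 \<le> onorm T * norm y" using onorm_pos_le[OF bclin_bl[OF T]] by simp
      fix a
      have "cmod (cinner (T a) y) \<le> norm (T a) * norm y" by (rule cs)
      also have "\<dots> \<le> onorm T * norm a * norm y"
        using onorm[OF bclin_bl[OF T], of a] by (simp add: mult_right_mono)
      finally show "cmod (cinner (T a) y) \<le> onorm T * norm y * norm (id a)" by (simp add: mult_ac)
    qed
  qed
  then obtain S where S: "\<And>x y. cinner (T x) y = cinner x (S y)" by (metis id_apply)
  have uniq: "S' = S" if "\<forall>x y. cinner (T x) y = cinner x (S' y)" for S'
  proof
    fix y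
    have "\<And>x. cinner x (S' y - S y) = 0" using that S by (simp add: cinner_diff_right)
    then show "S' y = S y" using ext_zero by fastforce
  qed
  have "cadjoint T = S" unfolding cadjoint_def
    by (rule the_equality) (use S uniq in auto)
  then show ?thesis using S by simp
qed

lemma logconv:
  fixes b :: "nat \<Rightarrow> real"
  assumes nn: "\<And>j. 0 \<le> b j"
    and lc: "\<And>j. (b (Suc j))^2 \<le> b j * b (Suc (Suc j))"
    and bd: "\<And>j. b j \<le> C * r^j" and r0: "0 \<le> r"
  shows "b 1 \<le> r * b 0"
proof (cases "b 0 = 0 \<or> b 1 = 0")
  case True
  then show ?thesis
  proof
    assume "b 0 = 0"
    then have "(b 1)^2 \<le> 0" using lc[of 0] by simp
    then show ?thesis using \<open>b 0 = 0\<close> by simp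
  next
    assume "b 1 = 0" then show ?thesis using nn r0 by simp
  qed
next
  case False
  then have b0: "0 < b 0" and b1: "0 < b 1" using nn[of 0] nn[of 1] by auto
  define \<rho> where "\<rho> = b 1 / b 0"
  have rho: "0 < \<rho>" unfolding \<rho>_def using b0 b1 by simp
  have step: "\<rho> * b n \<le> b (Suc n) \<and> 0 < b n" for n
  proof (induction n)
    case 0 then show ?case using b0 unfolding \<rho>_def by simp
  next
    case (Suc n)
    then have bn: "0 < b n" and h: "\<rho> * b n \<le> b (Suc n)" by auto
    have bs: "0 < b (Suc n)" using h rho bn by (meson mult_pos_pos less_le_trans)
    have "\<rho> * b n * b (Suc n) \<le> b (Suc n) * b (Suc n)" using h bs by (simp add: mult_right_mono)
    also have "\<dots> \<le> b n * b (Suc (Suc n))" using lc[of n] by (simp add: power2_eq_square)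
    finally have "b n * (\<rho> * b (Suc n)) \<le> b n * b (Suc (Suc n))" by (simp add: mult_ac)
    then have "\<rho> * b (Suc n) \<le> b (Suc (Suc n))" using bn by simp
    then show ?case using bs by simp
  qed
  have grow: "b 0 * \<rho>^n \<le> b n" for n
  proof (induction n)
    case 0 then show ?case by simp
  next
    case (Suc n)
    have "b 0 * \<rho>^Suc n = \<rho> * (b 0 * \<rho>^n)" by (simp add: mult_ac)
    also have "\<dots> \<le> \<rho> * b n" using Suc rho by (simp add: mult_left_mono)
    also have "\<dots> \<le> b (Suc n)" using step[of n] by simp
    finally show ?case .
  qed
  show ?thesis
  proof (rule ccontr)
    assume "\<not> ?thesis"
    then have rr: "r < \<rho>" unfolding \<rho>_def using b0 by (simp add: field_simps)
    show False
    proof (cases "r = 0")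
      case True
      then show False using bd[of 1] b1 by simp
    next
      case False
      then have rp: "0 < r" using r0 by simp
      have "1 < \<rho> / r" using rr rp by simp
      then obtain n where n: "C / b 0 < (\<rho> / r)^n" using real_arch_pow by blast
      then have "C < b 0 * (\<rho>^n / r^n)" using b0 by (simp add: field_simps power_divide)
      then have "C * r^n < b 0 * \<rho>^n" using rp by (simp add: field_simps)
      also have "\<dots> \<le> b n" by (rule grow)
      also have "\<dots> \<le> C * r^n" by (rule bd)
      finally show False by simp
    qed
  qed
qed



theorem mainTheorem1:
  fixes A K :: "'a::chilbert_space \<Rightarrow> 'a"
  assumes "bounded_clinear A" and "bounded_clinear K"
    and "positive_op A"
    and "hyponormal (cadjoint (A \<circ> K))"
  shows "\<forall>x. cmod (cinner (A (K x)) x) \<le> onorm K * Re (cinner (A x) x)"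
proof -
  have Ab: "bounded_clinear A" and Kb: "bounded_clinear K" and Ap: "positive_op A" using assms by auto
  define k where "k = onorm K"
  have k0: "0 \<le> k" unfolding k_def using onorm_pos_le[OF bclin_bl[OF Kb]] .
  have Kn: "norm (K z) \<le> k * norm z" for z unfolding k_def using onorm[OF bclin_bl[OF Kb]] .
  have sa: "cinner (A u) v = cinner u (A v)" for u v by (rule pos_selfadj[OF Ab Ap])
  have Apos: "Im (cinner (A z) z) = 0 \<and> 0 \<le> Re (cinner (A z) z)" for z
    using Ap unfolding positive_op_def by simp
  have AKb: "bounded_clinear (A \<circ> K)"
    unfolding bounded_clinear_def
  proof
    show "bounded_linear (A \<circ> K)"
      using bounded_linear_compose[OF bclin_bl[OF Ab] bclin_bl[OF Kb]] by (simp add: comp_def)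
    show "\<forall>c x. (A \<circ> K) (scaleC c x) = scaleC c ((A \<circ> K) x)"
      using Ab Kb by (simp add: bclin_scaleC)
  qed
  define T where "T = cadjoint (A \<circ> K)"
  have adj0: "cinner (A (K x)) y = cinner x (T y)" for x y
    using adj_prop[OF AKb, of x y] unfolding T_def by simp
  have Tadj: "cinner (T x) y = cinner x (A (K y))" for x y
  proof -
    have "cinner (T x) y = cnj (cinner y (T x))" by (rule cinner_commute)
    also have "\<dots> = cnj (cinner (A (K y)) x)" by (simp add: adj0)
    also have "\<dots> = cinner x (A (K y))" by (metis cinner_commute)
    finally show ?thesis .
  qed
  have TT: "cadjoint T = A \<circ> K"
    unfolding cadjoint_def
  proof (rule the_equality)
    show "\<forall>x y. cinner (T x) y = cinner x ((A \<circ> K) y)" using Tadj by simp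
  next
    fix S assume S: "\<forall>x y. cinner (T x) y = cinner x (S y)"
    show "S = A \<circ> K"
    proof
      fix y
      have "\<And>x. cinner x (S y - (A \<circ> K) y) = 0" using S Tadj by (simp add: cinner_diff_right)
      then show "S y = (A \<circ> K) y" using ext_zero by fastforce
    qed
  qed
  have hyp: "0 \<le> Re (cinner (A (K (T x)) - T (A (K x))) x)" for x
    using assms(4) unfolding hyponormal_def positive_op_def T_def[symmetric] TT by simp
  have star: "norm (A (K x)) \<le> k * norm (A x)" for x
  proof -
    have e1: "cinner (A (K (T x))) x = cinner (T x) (T x)" by (rule adj0)
    have e2: "cinner (T (A (K x))) x = cinner (A (K x)) (A (K x))" by (rule Tadj)
    have h1: "(norm (A (K x)))^2 \<le> (norm (T x))^2"
      using hyp[of x] unfolding cinner_diff_left e1 e2 norm_sq by simp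
    have "(norm (T x))^2 = Re (cinner (A (K (T x))) x)" unfolding e1 norm_sq ..
    also have "\<dots> = Re (cinner (K (T x)) (A x))" by (simp add: sa)
    also have "\<dots> \<le> cmod (cinner (K (T x)) (A x))" by (rule complex_Re_le_cmod)
    also have "\<dots> \<le> norm (K (T x)) * norm (A x)" by (rule cs)
    also have "\<dots> \<le> k * norm (T x) * norm (A x)" using Kn[of "T x"] by (simp add: mult_right_mono)
    finally have h2: "norm (T x) * norm (T x) \<le> norm (T x) * (k * norm (A x))"
      by (simp add: power2_eq_square mult_ac)
    have h3: "norm (T x) \<le> k * norm (A x)"
    proof (cases "norm (T x) = 0")
      case True then show ?thesis using k0 by simp
    next
      case False then have "0 < norm (T x)" by simp
      then show ?thesis using h2 by simp
    qed
    have "norm (A (K x)) \<le> norm (T x)" using h1 by (rule power2_le_imp_le) simp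
    then show ?thesis using h3 by linarith
  qed
  have "\<forall>y. \<exists>v. (\<forall>x. cinner (A (K x)) y = cinner (A x) v) \<and> norm v \<le> k * norm y"
  proof
    fix y
    show "\<exists>v. (\<forall>x. cinner (A (K x)) y = cinner (A x) v) \<and> norm v \<le> k * norm y"
    proof (rule sub_riesz)
      show "\<And>a b. A (a + b) = A a + A b" using Ab by (rule bclin_add)
      show "\<And>c a. A (scaleC c a) = scaleC c (A a)" using Ab by (rule bclin_scaleC)
      show "\<And>a b. cinner (A (K (a + b))) y = cinner (A (K a)) y + cinner (A (K b)) y"
        using Ab Kb by (simp add: bclin_add cinner_add_left)
      show "\<And>c a. cinner (A (K (scaleC c a))) y = c * cinner (A (K a)) y"
        using Ab Kb by (simp add: bclin_scaleC cinner_scaleC_left)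
      show "0 \<le> k * norm y" using k0 by simp
      fix a
      have "cmod (cinner (A (K a)) y) \<le> norm (A (K a)) * norm y" by (rule cs)
      also have "\<dots> \<le> k * norm (A a) * norm y" using star[of a] by (simp add: mult_right_mono)
      finally show "cmod (cinner (A (K a)) y) \<le> k * norm y * norm (A a)" by (simp add: mult_ac)
    qed
  qed
  from choice[OF this] obtain V where
    VV: "\<forall>y. (\<forall>x. cinner (A (K x)) y = cinner (A x) (V y)) \<and> norm (V y) \<le> k * norm y" by blast
  have V: "cinner (A (K x)) y = cinner (A x) (V y)" for x y using VV by blast
  have Vn: "norm (V y) \<le> k * norm y" for y using VV by blast
  define P where "P = (\<lambda>z. V (K z))"
  have Pn: "norm (P z) \<le> k^2 * norm z" for z
  proof -
    have "norm (P z) \<le> k * norm (K z)" unfolding P_def by (rule Vn)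
    also have "\<dots> \<le> k * (k * norm z)" using Kn[of z] k0 by (simp add: mult_left_mono)
    finally show ?thesis by (simp add: power2_eq_square mult_ac)
  qed
  have symP: "cinner (A (P u)) v = cinner (A u) (P v)" for u v
  proof -
    have "cinner (A (P u)) v = cinner (V (K u)) (A v)" unfolding P_def by (rule sa)
    also have "\<dots> = cnj (cinner (A v) (V (K u)))" by (rule cinner_commute)
    also have "\<dots> = cnj (cinner (A (K v)) (K u))" by (simp add: V)
    also have "\<dots> = cinner (K u) (A (K v))" by (metis cinner_commute)
    also have "\<dots> = cinner (A (K u)) (K v)" by (simp add: sa)
    also have "\<dots> = cinner (A u) (P v)" unfolding P_def by (rule V)
    finally show ?thesis .
  qed
  have Ppow: "norm ((P^^j) z) \<le> (k^2)^j * norm z" for j z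
  proof (induction j)
    case 0 then show ?case by simp
  next
    case (Suc j)
    have "norm ((P^^Suc j) z) = norm (P ((P^^j) z))" by simp
    also have "\<dots> \<le> k^2 * norm ((P^^j) z)" by (rule Pn)
    also have "\<dots> \<le> k^2 * ((k^2)^j * norm z)" using Suc by (simp add: mult_left_mono)
    finally show ?case by (simp add: mult_ac)
  qed
  have onA: "0 \<le> onorm A" using onorm_pos_le[OF bclin_bl[OF Ab]] .
  show ?thesis
  proof
    fix x
    define b where "b j = Re (cinner (A ((P^^j) x)) ((P^^j) x))" for j
    have nn: "0 \<le> b j" for j unfolding b_def using Apos by simp
    have lc: "(b (Suc j))^2 \<le> b j * b (Suc (Suc j))" for j
    proof -
      define u where "u = (P^^j) x"
      define w where "w = (P^^Suc (Suc j)) x"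
      have "cinner (A ((P^^Suc j) x)) ((P^^Suc j) x) = cinner (A (P u)) ((P^^Suc j) x)"
        unfolding u_def by simp
      also have "\<dots> = cinner (A u) (P ((P^^Suc j) x))" by (rule symP)
      also have "\<dots> = cinner (A u) w" unfolding w_def by simp
      finally have c: "b (Suc j) = Re (cinner (A u) w)" unfolding b_def by simp
      have "\<bar>Re (cinner (A u) w)\<bar> \<le> cmod (cinner (A u) w)" by (rule abs_Re_le_cmod)
      then have "(Re (cinner (A u) w))^2 \<le> (cmod (cinner (A u) w))^2"
        by (metis abs_ge_zero power2_abs power_mono)
      also have "\<dots> \<le> Re (cinner (A u) u) * Re (cinner (A w) w)" by (rule form_cs[OF Ab Ap])
      finally have f: "(Re (cinner (A u) w))^2 \<le> Re (cinner (A u) u) * Re (cinner (A w) w)" .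
      show ?thesis unfolding c using f unfolding b_def u_def w_def .
    qed
    have bd: "b j \<le> (onorm A * (norm x)^2) * ((k^2)^2)^j" for j
    proof -
      define z where "z = (P^^j) x"
      have "b j \<le> cmod (cinner (A z) z)" unfolding b_def z_def by (rule complex_Re_le_cmod)
      also have "\<dots> \<le> norm (A z) * norm z" by (rule cs)
      also have "\<dots> \<le> onorm A * norm z * norm z"
        using onorm[OF bclin_bl[OF Ab], of z] by (simp add: mult_right_mono)
      also have "\<dots> \<le> onorm A * ((k^2)^j * norm x) * ((k^2)^j * norm x)"
      proof -
        have z1: "norm z \<le> (k^2)^j * norm x" unfolding z_def by (rule Ppow)
        have "onorm A * norm z \<le> onorm A * ((k^2)^j * norm x)" using z1 onA by (rule mult_left_mono)
        then have "onorm A * norm z * norm z \<le> onorm A * ((k^2)^j * norm x) * norm z"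
          by (simp add: mult_right_mono)
        also have "\<dots> \<le> onorm A * ((k^2)^j * norm x) * ((k^2)^j * norm x)"
          using z1 onA k0 by (simp add: mult_left_mono)
        finally show ?thesis .
      qed
      also have "\<dots> = (onorm A * (norm x)^2) * ((k^2)^2)^j"
        by (simp add: power2_eq_square power_mult_distrib mult_ac)
      finally show ?thesis .
    qed
    have b1: "b 1 \<le> (k^2)^2 * b 0" by (rule logconv[OF nn lc bd]) simp
    have b0: "b 0 = Re (cinner (A x) x)" unfolding b_def by simp
    have b1e: "b 1 = Re (cinner (A (P x)) (P x))" unfolding b_def by simp
    define m where "m = Re (cinner (A (K x)) (K x))"
    have m0: "0 \<le> m" unfolding m_def using Apos by simp
    have me: "cinner (A (K x)) (K x) = cinner (A x) (P x)" unfolding P_def by (rule V)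
    have "m \<le> cmod (cinner (A x) (P x))" unfolding m_def me by (rule complex_Re_le_cmod)
    then have "m^2 \<le> (cmod (cinner (A x) (P x)))^2" using m0 by (simp add: power_mono)
    also have "\<dots> \<le> Re (cinner (A x) x) * Re (cinner (A (P x)) (P x))" by (rule form_cs[OF Ab Ap])
    also have "\<dots> = b 0 * b 1" using b0 b1e by simp
    also have "\<dots> \<le> b 0 * ((k^2)^2 * b 0)" using b1 nn[of 0] by (simp add: mult_left_mono)
    also have "\<dots> = (k^2 * b 0)^2" by (simp add: power2_eq_square mult_ac)
    finally have "m^2 \<le> (k^2 * b 0)^2" .
    then have mb: "m \<le> k^2 * b 0" by (rule power2_le_imp_le) (use nn[of 0] in simp)
    have "(cmod (cinner (A (K x)) x))^2 \<le> Re (cinner (A (K x)) (K x)) * Re (cinner (A x) x)"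
      by (rule form_cs[OF Ab Ap])
    also have "\<dots> = m * b 0" unfolding m_def b0 ..
    also have "\<dots> \<le> k^2 * b 0 * b 0" using mb nn[of 0] by (simp add: mult_right_mono)
    also have "\<dots> = (k * b 0)^2" by (simp add: power2_eq_square mult_ac)
    finally have "(cmod (cinner (A (K x)) x))^2 \<le> (k * b 0)^2" .
    then have "cmod (cinner (A (K x)) x) \<le> k * b 0" by (rule power2_le_imp_le) (use nn[of 0] k0 in simp)
    then show "cmod (cinner (A (K x)) x) \<le> onorm K * Re (cinner (A x) x)" unfolding k_def b0 .
  qed
qed

end
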